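(* Let $n\ge1$ and let $G$ be a simple undirected graph with vertex set $[n]$. Suppose its complement $\overline{G}$ satisfies: whenever $\{i,j\}$ is an edge of $\overline{G}$ with $i<j$, every pair $\{a,b\}$ with $i\le a<b\le j$ is an edge of $\overline{G}$. Let $Q(y)=\chi_{\overline{G}}(-y)/y$, which is a polynomial. Then, as formal power series, $$\frac{C_G(x)}{(1-x)^n}=(-1)^n\,n\sum_{m=0}^{\infty}Q(m)\,x^m.$$
   Context: $\overline{G}$ is the complement of $G$ (same vertex set; $\{a,b\}$ is an edge iff it is not an edge of $G$), and $\chi_{\overline{G}}$ is its chromatic polynomial. For a permutation $\sigma$ of $[n]$ (viewed as the word $\sigma(1)\sigma(2)\cdots\sigma(n)$), set $\sigma(n+1)=\sigma(1)$. The number of $G$-cyclic-descents $\mathrm{cdes}_G(\sigma)$ is the number of $1\le i\le n$ such that $\sigma(i)>\sigma(i+1)$ and $\{\sigma(i),\sigma(i+1)\}$ is an edge of $G$. The generalized cyclic Eulerian polynomial is $C_G(x)=\sum_{\sigma\in S_n}x^{\mathrm{cdes}_G(\sigma)}$, where $S_n$ is the set of permutations of $[n]$. *)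

theory Defs
  imports "HOL-Computational_Algebra.Computational_Algebra" "HOL-Combinatorics.Permutations"
begin

definition simple_graph_on :: "nat \<Rightarrow> (nat \<Rightarrow> nat \<Rightarrow> bool) \<Rightarrow> bool" where
  "simple_graph_on n E \<longleftrightarrow> (\<forall>a b. E a b \<longrightarrow> E b a) \<and> (\<forall>a. \<not> E a a)
     \<and> (\<forall>a b. E a b \<longrightarrow> a \<in> {1..n} \<and> b \<in> {1..n})"

definition compl_graph :: "nat \<Rightarrow> (nat \<Rightarrow> nat \<Rightarrow> bool) \<Rightarrow> nat \<Rightarrow> nat \<Rightarrow> bool" where
  "compl_graph n E a b \<longleftrightarrow> a \<in> {1..n} \<and> b \<in> {1..n} \<and> a \<noteq> b \<and> \<not> E a b"

definition num_colorings :: "'a set \<Rightarrow> ('a \<Rightarrow> 'a \<Rightarrow> bool) \<Rightarrow> nat \<Rightarrow> nat" where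
  "num_colorings V E k = card {c \<in> V \<rightarrow>\<^sub>E {..<k}. \<forall>a\<in>V. \<forall>b\<in>V. E a b \<longrightarrow> c a \<noteq> c b}"

text \<open>Chromatic polynomial: the polynomial agreeing with the number of proper colourings
  at every natural number (unique since a polynomial is determined by infinitely many values).\<close>
definition chromatic_poly :: "'a set \<Rightarrow> ('a \<Rightarrow> 'a \<Rightarrow> bool) \<Rightarrow> rat poly" where
  "chromatic_poly V E = (THE p. \<forall>k::nat. poly p (of_nat k) = of_nat (num_colorings V E k))"

definition cdes :: "nat \<Rightarrow> (nat \<Rightarrow> nat \<Rightarrow> bool) \<Rightarrow> (nat \<Rightarrow> nat) \<Rightarrow> nat" where
  "cdes n E \<sigma> = card {i \<in> {1..n}. let j = (if i = n then 1 else i + 1) in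
       \<sigma> i > \<sigma> j \<and> E (\<sigma> i) (\<sigma> j)}"

definition cyc_eulerian :: "nat \<Rightarrow> (nat \<Rightarrow> nat \<Rightarrow> bool) \<Rightarrow> rat poly" where
  "cyc_eulerian n E = (\<Sum>\<sigma>\<in>{\<sigma>. \<sigma> permutes {1..n}}. monom 1 (cdes n E \<sigma>))"

definition Q_poly :: "nat \<Rightarrow> (nat \<Rightarrow> nat \<Rightarrow> bool) \<Rightarrow> rat poly" where
  "Q_poly n E = pcompose (chromatic_poly {1..n} (compl_graph n E)) [:0, -1:] div [:0, 1:]"

end

theory Submission
  imports Defs "HOL-Combinatorics.Multiset_Permutations"
begin


definition Dsc :: "(nat\<Rightarrow>nat\<Rightarrow>bool) \<Rightarrow> nat \<Rightarrow> nat \<Rightarrow> nat" where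
  "Dsc E x y = (if y < x \<and> E x y then 1 else 0)"

fun des :: "(nat\<Rightarrow>nat\<Rightarrow>bool) \<Rightarrow> nat list \<Rightarrow> nat" where
  "des E (x # y # r) = Dsc E x y + des E (y # r)"
| "des E _ = 0"

lemma des_append:
  "u \<noteq> [] \<Longrightarrow> v \<noteq> [] \<Longrightarrow> des E (u @ v) = des E u + Dsc E (last u) (hd v) + des E v"
proof (induction u)
  case Nil then show ?case by simp
next
  case (Cons x u)
  show ?case
  proof (cases u)
    case Nil
    then show ?thesis using Cons.prems by (cases v) auto
  next
    case (Cons y u')
    then show ?thesis using Cons.IH Cons.prems by simp
  qed
qed

lemma des_sum: "des E l = (\<Sum>i<length l - 1. Dsc E (l!i) (l!Suc i))"
proof (induction E l rule: des.induct)
  case (1 E x y r)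
  have "(\<Sum>i<length (x # y # r) - 1. Dsc E ((x # y # r)!i) ((x # y # r)!Suc i))
      = (\<Sum>i<Suc (length r). Dsc E ((x # y # r)!i) ((x # y # r)!Suc i))" by simp
  also have "\<dots> = Dsc E x y + (\<Sum>i<length r. Dsc E ((y # r)!i) ((y # r)!Suc i))"
    by (subst sum.lessThan_Suc_shift) simp
  finally show ?case using 1 by simp
qed auto

definition cdl :: "(nat\<Rightarrow>nat\<Rightarrow>bool) \<Rightarrow> nat list \<Rightarrow> nat" where
  "cdl E w = des E (w @ [hd w])"

lemma cdl_rotate1: "cdl E (rotate1 w) = cdl E w"
proof (cases w)
  case Nil then show ?thesis by simp
next
  case (Cons x xs)
  show ?thesis
  proof (cases xs)
    case Nil then show ?thesis using Cons by simp
  next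
    case (Cons y ys)
    have ne: "xs \<noteq> []" using Cons by simp
    have "cdl E w = des E ([x] @ (xs @ [x]))" using \<open>w = x # xs\<close> by (simp add: cdl_def)
    also have "\<dots> = Dsc E x (hd xs) + des E xs + Dsc E (last xs) x"
      using des_append[of "[x]" "xs @ [x]" E] des_append[of xs "[x]" E] ne by simp
    finally have 1: "cdl E w = Dsc E x (hd xs) + des E xs + Dsc E (last xs) x" .
    have "cdl E (rotate1 w) = des E (xs @ ([x] @ [hd xs]))" using \<open>w = x # xs\<close> Cons by (simp add: cdl_def)
    also have "\<dots> = des E xs + Dsc E (last xs) x + Dsc E x (hd xs)"
      using des_append[of "xs" "[x] @ [hd xs]" E] des_append[of "[x]" "[hd xs]" E] ne by simp
    finally show ?thesis using 1 by simp
  qed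
qed

lemma cdl_rotate: "cdl E (rotate k w) = cdl E w"
  by (induction k) (simp_all add: cdl_rotate1)



definition ins :: "nat \<Rightarrow> nat \<Rightarrow> nat list \<Rightarrow> nat list" where
  "ins p j r = take p r @ j # drop p r"

lemma Dsc_le1: "Dsc E x y \<le> 1" by (simp add: Dsc_def)

lemma des_ins:
  assumes "p \<le> length r" "\<forall>z\<in>set r. z < j" "1 < j"
  shows "des E (1 # ins p j r @ [1]) + Dsc E ((1#r)!p) ((r@[1])!p)
       = des E (1 # r @ [1]) + Dsc E j ((r@[1])!p)"
proof -
  define u where "u = 1 # take p r"
  define v where "v = drop p r @ [1::nat]"
  have unz: "u \<noteq> []" and vnz: "v \<noteq> []" by (auto simp: u_def v_def)
  have e1: "1 # r @ [1] = u @ v" by (simp add: u_def v_def)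
  have e2: "1 # ins p j r @ [1] = u @ (j # v)" by (simp add: u_def v_def ins_def)
  have lu: "last u = (1#r)!p"
    using assms(1) by (cases p) (auto simp: u_def take_Suc_conv_app_nth)
  have lu2: "last u < j"
  proof (cases p)
    case 0 then show ?thesis using assms by (simp add: u_def)
  next
    case (Suc q)
    then have "q < length r" using assms by simp
    then show ?thesis using lu assms Suc by simp
  qed
  have hv: "hd v = (r@[1])!p"
    using assms(1) by (auto simp: v_def hd_append nth_append hd_drop_conv_nth)
  have dj: "des E (j # v) = Dsc E j (hd v) + des E v"
    using vnz by (cases v) auto
  have "des E (u @ (j # v)) = des E u + Dsc E (last u) j + des E (j # v)"
    using des_append[OF unz, of "j # v"] by simp
  moreover have "Dsc E (last u) j = 0" using lu2 by (simp add: Dsc_def)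
  moreover have "des E (u @ v) = des E u + Dsc E (last u) (hd v) + des E v"
    using des_append[OF unz vnz] .
  ultimately show ?thesis using e1 e2 dj lu hv by simp
qed



definition acnt :: "(nat\<Rightarrow>nat\<Rightarrow>bool) \<Rightarrow> nat \<Rightarrow> nat" where
  "acnt E j = card {i\<in>{1..<j}. \<not> E j i}"

lemma cdl_Cons1: "cdl E (1 # l) = des E (1 # l @ [1])"
  by (simp add: cdl_def)

lemma pow_step:
  assumes "c \<le> e" "e \<le> (1::nat)"
  shows "(fps_X::rat fps) ^ (d + e - c) = fps_X ^ d * (1 + (of_nat e - of_nat c) * (fps_X - 1))"
proof -
  have "(e = 0 \<and> c = 0) \<or> (e = 1 \<and> c = 0) \<or> (e = 1 \<and> c = 1)" using assms by auto
  then show ?thesis by (auto simp: algebra_simps)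
qed

lemma sum_ins:
  assumes r: "r \<in> permutations_of_set {2..<j}" and j: "2 \<le> j"
    and clq: "\<forall>y x. 1 \<le> y \<longrightarrow> y < x \<longrightarrow> x < j \<longrightarrow> \<not> E j y \<longrightarrow> \<not> E x y"
  shows "(\<Sum>p\<le>length r. (fps_X::rat fps) ^ cdl E (1 # ins p j r))
       = fps_X ^ cdl E (1 # r) * (of_nat (j - 1) + (of_nat (j - 1) - of_nat (acnt E j)
            - of_nat (cdl E (1 # r))) * (fps_X - 1))"
proof -
  define d where "d = cdl E (1 # r)"
  define x where "x p = (1#r)!p" for p
  define y where "y p = (r@[1::nat])!p" for p
  define e where "e p = Dsc E j (y p)" for p
  define c where "c p = Dsc E (x p) (y p)" for p
  have rset: "set r = {2..<j}" and rd: "distinct r" using r by (auto simp: permutations_of_set_def)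
  have lr: "length r = j - 2" using distinct_card[OF rd] rset by simp
  have set1: "set (r @ [1]) = {1..<j}" using rset j by auto
  have dist1: "distinct (r @ [1])" using rd rset by auto
  have xin: "x p \<in> {1..<j}" if "p \<le> length r" for p
    using that rset j nth_mem[of "p - 1" r] by (cases p) (auto simp: x_def)
  have yin: "y p \<in> {1..<j}" if "p \<le> length r" for p
    using that set1 nth_mem[of p "r @ [1]"] by (simp add: y_def)
  have ce: "c p \<le> e p" if "p \<le> length r" for p
  proof (cases "e p = 0")
    case True
    then have "\<not> E j (y p)" using yin[OF that] by (auto simp: e_def Dsc_def)
    then have "\<not> (y p < x p \<and> E (x p) (y p))" using clq xin[OF that] yin[OF that] by auto
    then show ?thesis by (auto simp: c_def Dsc_def)
  next
    case False then show ?thesis using Dsc_le1[of E "x p" "y p"] by (simp add: c_def)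
  qed
  have step: "cdl E (1 # ins p j r) = d + e p - c p" if "p \<le> length r" for p
    using des_ins[OF that, of j E] rset j unfolding cdl_Cons1 d_def e_def c_def x_def y_def
    by auto
  have sc: "(\<Sum>p\<le>length r. c p) = d"
  proof -
    have "d = (\<Sum>i<length (1 # r @ [1]) - 1. Dsc E ((1 # r @ [1])!i) ((1 # r @ [1])!Suc i))"
      unfolding d_def cdl_Cons1 by (rule des_sum)
    also have "\<dots> = (\<Sum>i\<le>length r. c i)"
      by (rule sum.cong) (auto simp: lessThan_Suc_atMost[symmetric] c_def x_def y_def nth_Cons' nth_append)
    finally show ?thesis by simp
  qed
  have se: "(\<Sum>p\<le>length r. e p) + acnt E j = j - 1"
  proof -
    have bij: "bij_betw y {..length r} {1..<j}"
      unfolding y_def using bij_betw_nth[OF dist1, of "{..<length (r @ [1])}" "{1..<j}"] set1 by (simp add: lessThan_Suc_atMost)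
    have "(\<Sum>p\<le>length r. 1 - e p) = (\<Sum>z\<in>{1..<j}. 1 - Dsc E j z)"
      unfolding e_def using sum.reindex_bij_betw[OF bij, of "\<lambda>z. 1 - Dsc E j z"] by simp
    also have "\<dots> = (\<Sum>z\<in>{1..<j}. if \<not> E j z then 1 else 0)"
      by (rule sum.cong) (auto simp: Dsc_def)
    also have "\<dots> = acnt E j"
      unfolding acnt_def by (simp add: sum.inter_filter[symmetric])
    finally have 1: "(\<Sum>p\<le>length r. 1 - e p) = acnt E j" .
    have "(\<Sum>p\<le>length r. e p) + (\<Sum>p\<le>length r. 1 - e p) = (\<Sum>p\<le>length r. (1::nat))"
      by (subst sum.distrib[symmetric]) (rule sum.cong, auto simp: e_def Dsc_def)
    then show ?thesis using 1 lr j by simp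
  qed
  have "(\<Sum>p\<le>length r. (fps_X::rat fps) ^ cdl E (1 # ins p j r))
      = (\<Sum>p\<le>length r. fps_X ^ d * (1 + (of_nat (e p) - of_nat (c p)) * (fps_X - 1)))"
    proof (rule sum.cong)
    fix p assume "p \<in> {..length r}"
    then have "p \<le> length r" by simp
    show "(fps_X::rat fps) ^ cdl E (1 # ins p j r) = fps_X ^ d * (1 + (of_nat (e p) - of_nat (c p)) * (fps_X - 1))"
      unfolding step[OF \<open>p \<le> length r\<close>] by (rule pow_step[OF ce[OF \<open>p \<le> length r\<close>]]) (simp add: e_def Dsc_def)
  qed simp
  also have "\<dots> = fps_X ^ d * (of_nat (length r + 1) + (of_nat (\<Sum>p\<le>length r. e p) - of_nat (\<Sum>p\<le>length r. c p)) * (fps_X - 1))"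
    by (simp add: sum_distrib_left[symmetric] sum.distrib sum_subtractf sum_distrib_right[symmetric] algebra_simps)
  also have "\<dots> = fps_X ^ d * (of_nat (j - 1) + (of_nat (j - 1) - of_nat (acnt E j) - of_nat d) * (fps_X - 1))"
  proof -
    have a: "length r + 1 = j - 1" using lr j by simp
    have b: "(of_nat (\<Sum>p\<le>length r. e p) :: rat fps) = of_nat (j - 1) - of_nat (acnt E j)"
      using arg_cong[OF se, of "of_nat :: nat \<Rightarrow> rat fps"] by (simp add: algebra_simps)
    show ?thesis using a b sc by simp
  qed
  finally show ?thesis by (simp add: d_def)
qed



lemma ins_inj:
  assumes r: "r \<in> permutations_of_set A" and p: "p \<in> {..length r}"
      and s: "s \<in> permutations_of_set A" and q: "q \<in> {..length s}" and "j \<notin> A"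
      and eq: "ins p j r = ins q j s"
  shows "r = s" "p = q"
proof -
    have "j \<notin> set (take p r)" "j \<notin> set (drop p r)"
      using r assms(5) by (auto simp: permutations_of_set_def dest: in_set_takeD in_set_dropD)
    then have "take p r = take q s \<and> drop p r = drop q s"
      using eq append_Cons_eq_iff[of j "take p r" "drop p r" "take q s" "drop q s"] by (simp add: ins_def)
    moreover then show "r = s" by (metis append_take_drop_id)
    ultimately show "p = q" using p q by (metis atMost_iff length_take min.absorb2)
qed

lemma ins_bij:
  assumes "finite A" "j \<notin> A"
  shows "bij_betw (\<lambda>(r,p). ins p j r) (Sigma (permutations_of_set A) (\<lambda>r. {..length r}))
           (permutations_of_set (insert j A))"
  unfolding bij_betw_def
proof
  show "inj_on (\<lambda>(r,p). ins p j r) (Sigma (permutations_of_set A) (\<lambda>r. {..length r}))"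
    by (rule inj_onI) (auto dest: ins_inj[OF _ _ _ _ assms(2)])
next
  show "(\<lambda>(r,p). ins p j r) ` (Sigma (permutations_of_set A) (\<lambda>r. {..length r}))
        = permutations_of_set (insert j A)"
  proof
    show "(\<lambda>(r,p). ins p j r) ` (Sigma (permutations_of_set A) (\<lambda>r. {..length r}))
        \<subseteq> permutations_of_set (insert j A)"
    proof
      fix t assume "t \<in> (\<lambda>(r,p). ins p j r) ` (Sigma (permutations_of_set A) (\<lambda>r. {..length r}))"
      then obtain r p where r: "r \<in> permutations_of_set A" and p: "p \<in> {..length r}" and t: "t = ins p j r"
        by auto
      have sr: "set r = A" "distinct r" using r by (auto simp: permutations_of_set_def)
      have "set (ins p j r) = insert j (set r)"
        by (simp add: ins_def) (metis append_take_drop_id set_append Un_insert_right insert_commute)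
      moreover have "distinct (ins p j r)"
        using sr assms(2) by (simp add: ins_def) (metis append_take_drop_id distinct_append set_append Un_iff)
      ultimately show "t \<in> permutations_of_set (insert j A)"
        using sr t by (auto simp: permutations_of_set_def)
    qed
  next
    show "permutations_of_set (insert j A) \<subseteq> (\<lambda>(r,p). ins p j r) ` (Sigma (permutations_of_set A) (\<lambda>r. {..length r}))"
    proof
      fix t assume t: "t \<in> permutations_of_set (insert j A)"
      then have "j \<in> set t" "distinct t" "set t = insert j A" by (auto simp: permutations_of_set_def)
      then obtain u v where uv: "t = u @ j # v" by (meson split_list)
      have "u @ v \<in> permutations_of_set A"
        using \<open>distinct t\<close> \<open>set t = insert j A\<close> assms(2) uv by (auto simp: permutations_of_set_def)
      moreover have "t = ins (length u) j (u @ v)" using uv by (simp add: ins_def)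
      ultimately show "t \<in> (\<lambda>(r,p). ins p j r) ` (Sigma (permutations_of_set A) (\<lambda>r. {..length r}))"
        by (intro image_eqI[of _ _ "(u @ v, length u)"]) auto
    qed
  qed
qed

definition Fp :: "(nat\<Rightarrow>nat\<Rightarrow>bool) \<Rightarrow> nat \<Rightarrow> rat fps" where
  "Fp E j = (\<Sum>r\<in>permutations_of_set {2..j}. fps_X ^ cdl E (1 # r))"

lemma X_deriv_pow: "fps_X * fps_deriv ((fps_X::rat fps) ^ d) = of_nat d * fps_X ^ d"
proof (cases d)
  case 0 then show ?thesis by simp
next
  case (Suc k)
  have "fps_deriv ((fps_X::rat fps) ^ d) = fps_const (of_nat d) * fps_deriv fps_X * fps_X ^ (d - 1)"
    by (rule fps_deriv_power)
  also have "\<dots> = fps_const (of_nat d) * fps_X ^ k" using Suc by (simp only: fps_deriv_fps_X mult_1_right diff_Suc_1)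
  finally have "fps_X * fps_deriv ((fps_X::rat fps) ^ d) = fps_const (of_nat d) * (fps_X * fps_X ^ k)"
    by (simp only: mult.left_commute)
  also have "fps_X * fps_X ^ k = (fps_X::rat fps) ^ d" using Suc by (simp only: power_Suc)
  finally show ?thesis by (simp only: fps_of_nat)
qed

lemma Fp_rec:
  assumes j: "2 \<le> j"
    and clq: "\<forall>y x. 1 \<le> y \<longrightarrow> y < x \<longrightarrow> x < j \<longrightarrow> \<not> E j y \<longrightarrow> \<not> E x y"
  shows "Fp E j = (of_nat (j-1) + (of_nat (j-1) - of_nat (acnt E j)) * (fps_X - 1)) * Fp E (j - 1)
                  - (fps_X - 1) * (fps_X * fps_deriv (Fp E (j - 1)))"
proof -
  have ij: "insert j {2..<j} = {2..j}" using j by auto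
  have j1: "{2..j-1} = {2..<j}" using j by auto
  have "Fp E j = (\<Sum>x\<in>Sigma (permutations_of_set {2..<j}) (\<lambda>r. {..length r}).
                    fps_X ^ cdl E (1 # (\<lambda>(r,p). ins p j r) x))"
    unfolding Fp_def using sum.reindex_bij_betw[OF ins_bij[of "{2..<j}" j], of "\<lambda>t. fps_X ^ cdl E (1 # t)"]
    by (simp add: ij) (rule sym, assumption)
  also have "\<dots> = (\<Sum>r\<in>permutations_of_set {2..<j}. \<Sum>p\<le>length r. fps_X ^ cdl E (1 # ins p j r))"
    by (subst sum.Sigma) (auto simp: case_prod_beta finite_permutations_of_set)
  also have "\<dots> = (\<Sum>r\<in>permutations_of_set {2..<j}. fps_X ^ cdl E (1 # r) * (of_nat (j - 1) + (of_nat (j - 1) - of_nat (acnt E j)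
            - of_nat (cdl E (1 # r))) * (fps_X - 1)))"
    by (rule sum.cong[OF refl], rule sum_ins[OF _ j clq])
  also have "\<dots> = (of_nat (j-1) + (of_nat (j-1) - of_nat (acnt E j)) * (fps_X - 1)) * Fp E (j - 1)
                  - (fps_X - 1) * (\<Sum>r\<in>permutations_of_set {2..<j}. of_nat (cdl E (1 # r)) * fps_X ^ cdl E (1 # r))"
    unfolding Fp_def j1
    by (simp add: sum_distrib_left sum_distrib_right sum_subtractf[symmetric] algebra_simps)
  also have "(\<Sum>r\<in>permutations_of_set {2..<j}. of_nat (cdl E (1 # r)) * fps_X ^ cdl E (1 # r))
      = fps_X * fps_deriv (Fp E (j - 1))"
    unfolding Fp_def j1 by (simp add: fps_deriv_sum sum_distrib_left X_deriv_pow)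
  finally show ?thesis .
qed



definition Gs :: "(nat\<Rightarrow>nat\<Rightarrow>bool) \<Rightarrow> nat \<Rightarrow> rat fps" where
  "Gs E j = Abs_fps (\<lambda>m. of_nat (\<Prod>i\<in>{2..j}. m + acnt E i))"

lemma X_deriv_nth: "(fps_X * fps_deriv (f::rat fps)) $ m = of_nat m * f $ m"
  by (cases m) (simp_all add: fps_X_mult_nth fps_deriv_nth)

lemma Gs_rec:
  assumes "2 \<le> j"
  shows "Gs E j = fps_const (of_nat (acnt E j)) * Gs E (j-1) + fps_X * fps_deriv (Gs E (j-1))"
proof (rule fps_ext)
  fix m
  have s: "{2..j} = insert j {2..j-1}" using assms by auto
  have "(\<Prod>i\<in>{2..j}. m + acnt E i) = (m + acnt E j) * (\<Prod>i\<in>{2..j-1}. m + acnt E i)"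
    unfolding s by (subst prod.insert) auto
  then show "Gs E j $ m = (fps_const (of_nat (acnt E j)) * Gs E (j-1) + fps_X * fps_deriv (Gs E (j-1))) $ m"
    unfolding Gs_def by (simp only: fps_add_nth X_deriv_nth fps_mult_left_const_nth fps_nth_Abs_fps)
      (simp add: algebra_simps)
qed

lemma alg_step:
  fixes F G A :: "rat fps"
  assumes F: "F = G * (1 - fps_X) ^ k" and k: "1 \<le> k"
  shows "(of_nat k + (of_nat k - A) * (fps_X - 1)) * F - (fps_X - 1) * (fps_X * fps_deriv F)
       = (A * G + fps_X * fps_deriv G) * (1 - fps_X) ^ Suc k"
proof -
  define P where "P = (1 - fps_X :: rat fps) ^ (k - 1)"
  have kP: "(1 - fps_X :: rat fps) ^ k = (1 - fps_X) * P"
    unfolding P_def using k by (cases k) auto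
  have "fps_deriv ((1 - fps_X) ^ k :: rat fps) = fps_const (of_nat k) * fps_deriv (1 - fps_X) * (1 - fps_X) ^ (k - 1)"
    by (rule fps_deriv_power)
  moreover have dd: "fps_deriv (1 - fps_X :: rat fps) = -1" by simp
  ultimately have d1: "fps_deriv ((1 - fps_X) ^ k :: rat fps) = - of_nat k * P"
    unfolding P_def by (simp add: fps_of_nat)
  have dF: "fps_deriv F = fps_deriv G * ((1 - fps_X) * P) - G * of_nat k * P"
  proof -
    have "fps_deriv F = fps_deriv G * (1 - fps_X) ^ k + G * fps_deriv ((1 - fps_X) ^ k)"
      unfolding F by (simp only: fps_deriv_mult add.commute)
    also have "\<dots> = fps_deriv G * ((1 - fps_X) * P) + G * (- of_nat k * P)"
      by (simp only: d1, simp only: kP)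
    finally show ?thesis by (simp add: algebra_simps)
  qed
  have e: "(1 - fps_X :: rat fps) ^ Suc k = (1 - fps_X) * ((1 - fps_X) * P)"
    by (simp only: power_Suc kP)
  show ?thesis unfolding dF e unfolding F kP by (simp add: algebra_simps)
qed

lemma Fp_1: "Fp E 1 = 1"
  by (simp add: Fp_def cdl_def Dsc_def)

lemma Gs_1: "Gs E 1 * (1 - fps_X) = 1"
proof (rule fps_ext)
  fix m
  show "(Gs E 1 * (1 - fps_X)) $ m = (1::rat fps) $ m"
    by (cases m) (simp_all add: Gs_def algebra_simps fps_X_mult_right_nth)
qed

lemma Fp_Gs:
  assumes clq: "\<forall>j. 2 \<le> j \<longrightarrow> j \<le> n \<longrightarrow> (\<forall>y x. 1 \<le> y \<longrightarrow> y < x \<longrightarrow> x < j \<longrightarrow> \<not> E j y \<longrightarrow> \<not> E x y)"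
    and j: "1 \<le> j"
  shows "j \<le> n \<Longrightarrow> Fp E j = Gs E j * (1 - fps_X) ^ j"
  using j
proof (induction j rule: nat_induct_at_least)
  case base
  then show ?case using Fp_1 Gs_1 by simp
next
  case (Suc k)
  have IH: "Fp E k = Gs E k * (1 - fps_X) ^ k" using Suc by simp
  have "Fp E (Suc k) = (of_nat k + (of_nat k - of_nat (acnt E (Suc k))) * (fps_X - 1)) * Fp E k
                  - (fps_X - 1) * (fps_X * fps_deriv (Fp E k))"
  proof -
    have j2: "2 \<le> Suc k" and "Suc k \<le> n" using Suc by simp_all
    then have c: "\<forall>y x. 1 \<le> y \<longrightarrow> y < x \<longrightarrow> x < Suc k \<longrightarrow> \<not> E (Suc k) y \<longrightarrow> \<not> E x y"
      using clq by blast
    from Fp_rec[OF j2 c] show ?thesis by (simp only: diff_Suc_1)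
  qed
  also have "\<dots> = (of_nat (acnt E (Suc k)) * Gs E k + fps_X * fps_deriv (Gs E k)) * (1 - fps_X) ^ Suc k"
    by (rule alg_step[OF IH Suc(1)])
  also have "of_nat (acnt E (Suc k)) * Gs E k + fps_X * fps_deriv (Gs E k) = Gs E (Suc k)"
    using Gs_rec[of "Suc k" E] Suc(1) by (simp add: fps_of_nat)
  finally show ?case .
qed



lemma map_perm_bij:
  "bij_betw (\<lambda>\<sigma>. map \<sigma> [1..<Suc n]) {\<sigma>. \<sigma> permutes {1..n}} (permutations_of_set {1..n})"
  unfolding bij_betw_def
proof
  show "inj_on (\<lambda>\<sigma>. map \<sigma> [1..<Suc n]) {\<sigma>. \<sigma> permutes {1..n}}"
  proof (rule inj_onI)
    fix \<sigma> \<tau> assume s: "\<sigma> \<in> {\<sigma>. \<sigma> permutes {1..n}}" and t: "\<tau> \<in> {\<sigma>. \<sigma> permutes {1..n}}"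
      and eq: "map \<sigma> [1..<Suc n] = map \<tau> [1..<Suc n]"
    show "\<sigma> = \<tau>"
    proof
      fix x show "\<sigma> x = \<tau> x"
      proof (cases "x \<in> {1..n}")
        case True then show ?thesis using eq by (auto simp: map_eq_conv)
      next
        case False then show ?thesis using s t by (simp add: permutes_not_in)
      qed
    qed
  qed
next
  show "(\<lambda>\<sigma>. map \<sigma> [1..<Suc n]) ` {\<sigma>. \<sigma> permutes {1..n}} = permutations_of_set {1..n}"
  proof
    show "(\<lambda>\<sigma>. map \<sigma> [1..<Suc n]) ` {\<sigma>. \<sigma> permutes {1..n}} \<subseteq> permutations_of_set {1..n}"
    proof
      fix w assume "w \<in> (\<lambda>\<sigma>. map \<sigma> [1..<Suc n]) ` {\<sigma>. \<sigma> permutes {1..n}}"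
      then obtain \<sigma> where s: "\<sigma> permutes {1..n}" and w: "w = map \<sigma> [1..<Suc n]" by auto
      have "set w = \<sigma> ` {1..n}" using w by (simp only: set_map set_upt atLeastLessThanSuc_atLeastAtMost)
      then have "set w = {1..n}" using permutes_image[OF s] by simp
      moreover have "distinct w" using w permutes_inj_on[OF s] by (simp add: distinct_map)
      ultimately show "w \<in> permutations_of_set {1..n}" by (simp add: permutations_of_set_def)
    qed
  next
    show "permutations_of_set {1..n} \<subseteq> (\<lambda>\<sigma>. map \<sigma> [1..<Suc n]) ` {\<sigma>. \<sigma> permutes {1..n}}"
    proof
      fix w assume w: "w \<in> permutations_of_set {1..n}"
      then have sw: "set w = {1..n}" "distinct w" by (auto simp: permutations_of_set_def)
      have lw: "length w = n" using distinct_card[OF sw(2)] sw(1) by simp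
      define \<sigma> where "\<sigma> i = (if i \<in> {1..n} then w ! (i - 1) else i)" for i
      have b1: "bij_betw (nth w) {..<n} {1..n}" using bij_betw_nth[OF sw(2)] lw sw(1) by simp
      have b2: "bij_betw (\<lambda>i. i - 1) {1..n} {..<n}"
        by (rule bij_betw_byWitness[where f' = Suc]) auto
      have "bij_betw (nth w \<circ> (\<lambda>i. i - 1)) {1..n} {1..n}" by (rule bij_betw_trans[OF b2 b1])
      then have "bij_betw \<sigma> {1..n} {1..n}"
        by (rule bij_betw_cong[THEN iffD1, rotated]) (simp add: \<sigma>_def)
      then have p: "\<sigma> permutes {1..n}" by (rule bij_imp_permutes) (auto simp: \<sigma>_def)
      have "map \<sigma> [1..<Suc n] = w"
        by (rule nth_equalityI) (auto simp: lw \<sigma>_def simp del: upt_Suc)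
      then show "w \<in> (\<lambda>\<sigma>. map \<sigma> [1..<Suc n]) ` {\<sigma>. \<sigma> permutes {1..n}}" using p by auto
    qed
  qed
qed

lemma cdes_cdl:
  assumes "1 \<le> n"
  shows "cdes n E \<sigma> = cdl E (map \<sigma> [1..<Suc n])"
proof -
  define w where "w = map \<sigma> [1..<Suc n]"
  have lw: "length w = n" by (simp add: w_def)
  have "cdes n E \<sigma> = (\<Sum>i\<in>{1..n}. Dsc E (\<sigma> i) (\<sigma> (if i = n then 1 else i + 1)))"
    unfolding cdes_def Dsc_def Let_def by (simp add: sum.inter_filter[symmetric])
  also have "\<dots> = (\<Sum>i<n. Dsc E (\<sigma> (Suc i)) (\<sigma> (if Suc i = n then 1 else Suc i + 1)))"
    by (simp add: sum.atLeast1_atMost_eq)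
  also have "\<dots> = (\<Sum>i<length (w @ [hd w]) - 1. Dsc E ((w @ [hd w])!i) ((w @ [hd w])!Suc i))"
  proof (rule sum.cong)
    show "{..<n} = {..<length (w @ [hd w]) - 1}" using lw by simp
  next
    fix i assume "i \<in> {..<length (w @ [hd w]) - 1}"
    then have i: "i < n" using lw by simp
    have a: "(w @ [hd w]) ! i = \<sigma> (Suc i)" using i lw by (simp add: nth_append w_def del: upt_Suc)
    have b: "(w @ [hd w]) ! Suc i = \<sigma> (if Suc i = n then 1 else Suc i + 1)"
    proof (cases "Suc i = n")
      case True
      then have "(w @ [hd w]) ! Suc i = hd w" using lw by (simp add: nth_append)
      also have "hd w = \<sigma> 1" using assms by (simp add: w_def hd_map upt_rec)
      finally show ?thesis using True by simp
    next
      case False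
      then have "Suc i < n" using i by simp
      then show ?thesis using lw False by (simp add: nth_append w_def del: upt_Suc)
    qed
    show "Dsc E (\<sigma> (Suc i)) (\<sigma> (if Suc i = n then 1 else Suc i + 1)) = Dsc E ((w @ [hd w])!i) ((w @ [hd w])!Suc i)"
      using a b by simp
  qed
  also have "\<dots> = cdl E w" unfolding cdl_def by (rule des_sum[symmetric])
  finally show ?thesis by (simp add: w_def)
qed



lemma mod_n_eq:
  fixes m n :: nat
  assumes "m mod n = 0" "0 < m" "m < 2 * n"
  shows "m = n"
proof -
  obtain c where c: "m = n * c" using assms(1) by (auto simp: mod_eq_0_iff_dvd dvd_def)
  have "c \<noteq> 0" using c assms(2) by auto
  moreover have "c < 2" using c assms(3) by auto
  ultimately have "c = 1" by auto
  then show ?thesis using c by simp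
qed

lemma rot_bij:
  assumes n: "1 \<le> n"
  shows "bij_betw (\<lambda>(r,k). rotate k (1 # r)) (Sigma (permutations_of_set {2..n}) (\<lambda>_. {..<n}))
           (permutations_of_set {1..n})"
  unfolding bij_betw_def
proof
  have len: "length r = n - 1" if "r \<in> permutations_of_set {2..n}" for r
    using that distinct_card[of r] by (auto simp: permutations_of_set_def)
  show "inj_on (\<lambda>(r,k). rotate k (1 # r)) (Sigma (permutations_of_set {2..n}) (\<lambda>_. {..<n}))"
  proof (rule inj_onI)
    fix a b assume a: "a \<in> Sigma (permutations_of_set {2..n}) (\<lambda>_. {..<n})"
      and b: "b \<in> Sigma (permutations_of_set {2..n}) (\<lambda>_. {..<n})"
      and eq0: "(\<lambda>(r,k). rotate k (1 # r)) a = (\<lambda>(r,k). rotate k (1 # r)) b"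
    obtain r k where ak: "a = (r, k)" by (cases a)
    obtain r' k' where bk: "b = (r', k')" by (cases b)
    have r: "r \<in> permutations_of_set {2..n}" and k: "k \<in> {..<n}"
      and r': "r' \<in> permutations_of_set {2..n}" and k': "k' \<in> {..<n}"
      and eq: "rotate k (1 # r) = rotate k' (1 # r')" using a b eq0 by (auto simp: ak bk)
    have l1: "length (1 # r) = n" "length (1 # r') = n" using len r r' n by auto
    have "1 # r = rotate n (1 # r)" using l1 by simp
    also have "\<dots> = rotate (n - k) (rotate k (1 # r))" using k by (simp add: rotate_rotate)
    also have "\<dots> = rotate (n - k) (rotate k' (1 # r'))" using eq by simp
    also have "\<dots> = rotate (n - k + k') (1 # r')" by (simp only: rotate_rotate)
    finally have e1: "1 # r = rotate (n - k + k') (1 # r')" .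
    have d': "distinct (1 # r')" using r' by (auto simp: permutations_of_set_def)
    have "rotate (n - k + k') (1 # r') ! 0 = (1 # r') ! ((n - k + k') mod n)"
      using l1 n by (simp add: nth_rotate)
    then have "(1 # r') ! ((n - k + k') mod n) = (1 # r') ! 0" using e1[symmetric] by simp
    moreover have mlt: "(n - k + k') mod n < length (1 # r')" using l1 n by simp
    moreover have zlt: "0 < length (1 # r')" by simp
    ultimately have m0: "(n - k + k') mod n = 0"
      using nth_eq_iff_index_eq[OF d' mlt zlt] by simp
    have b1: "0 < n - k + k'" and b2: "n - k + k' < 2 * n" using k k' by auto
    have "n - k + k' = n" using mod_n_eq[OF m0 b1 b2] .
    then have kk: "k = k'" using k k' by auto
    have "1 # r = 1 # r'" using e1 kk l1 k by simp
    then show "a = b" using kk by (simp add: ak bk)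
  qed
  show "(\<lambda>(r,k). rotate k (1 # r)) ` (Sigma (permutations_of_set {2..n}) (\<lambda>_. {..<n}))
        = permutations_of_set {1..n}"
  proof
    show "(\<lambda>(r,k). rotate k (1 # r)) ` (Sigma (permutations_of_set {2..n}) (\<lambda>_. {..<n}))
        \<subseteq> permutations_of_set {1..n}"
    proof
      fix t assume "t \<in> (\<lambda>(r,k). rotate k (1 # r)) ` (Sigma (permutations_of_set {2..n}) (\<lambda>_. {..<n}))"
      then obtain r k where r: "r \<in> permutations_of_set {2..n}" and t: "t = rotate k (1 # r)" by auto
      have "set r = {2..n}" "distinct r" using r by (auto simp: permutations_of_set_def)
      moreover have "insert 1 {2..n} = {1..n}" using n by auto
      ultimately have "set (1 # r) = {1..n}" "distinct (1 # r)" by auto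
      then show "t \<in> permutations_of_set {1..n}" unfolding t
        by (simp add: permutations_of_set_def)
    qed
  next
    show "permutations_of_set {1..n} \<subseteq> (\<lambda>(r,k). rotate k (1 # r)) ` (Sigma (permutations_of_set {2..n}) (\<lambda>_. {..<n}))"
    proof
      fix w assume w: "w \<in> permutations_of_set {1..n}"
      then have sw: "set w = {1..n}" "distinct w" by (auto simp: permutations_of_set_def)
      have lw: "length w = n" using distinct_card[OF sw(2)] sw(1) by simp
      have "1 \<in> set w" using sw n by auto
      then obtain u v where uv: "w = u @ 1 # v" by (meson split_list)
      have s1: "set (v @ u) = set w - {1}" using sw(2) uv by auto
      have s2: "{1..n} - {1} = {2..(n::nat)}" by auto
      have "distinct (v @ u)" using sw(2) uv by auto
      then have rp: "v @ u \<in> permutations_of_set {2..n}"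
        using s1 s2 sw(1) by (simp add: permutations_of_set_def)
      have "rotate (Suc (length v) mod n) (1 # v @ u) = rotate (Suc (length v)) (1 # v @ u)"
      proof -
        have ll: "length (1 # v @ u) = n" using lw uv by simp
        show ?thesis by (metis ll rotate_conv_mod)
      qed
      also have "\<dots> = rotate (length (1 # v)) ((1 # v) @ u)" by simp
      also have "\<dots> = w" unfolding rotate_append uv by simp
      finally have "w = rotate (Suc (length v) mod n) (1 # v @ u)" by simp
      moreover have "Suc (length v) mod n \<in> {..<n}" using n by simp
      ultimately show "w \<in> (\<lambda>(r,k). rotate k (1 # r)) ` (Sigma (permutations_of_set {2..n}) (\<lambda>_. {..<n}))"
        using rp by (intro image_eqI[of _ _ "(v @ u, Suc (length v) mod n)"]) auto
    qed
  qed
qed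

lemma cyc_Fp:
  assumes n: "1 \<le> n"
  shows "fps_of_poly (cyc_eulerian n E) = of_nat n * Fp E n"
proof -
  have "fps_of_poly (cyc_eulerian n E) = (\<Sum>\<sigma>\<in>{\<sigma>. \<sigma> permutes {1..n}}. fps_X ^ cdes n E \<sigma>)"
    by (simp add: cyc_eulerian_def fps_of_poly_sum fps_of_poly_monom')
  also have "\<dots> = (\<Sum>\<sigma>\<in>{\<sigma>. \<sigma> permutes {1..n}}. fps_X ^ cdl E (map \<sigma> [1..<Suc n]))"
    using cdes_cdl[OF n] by simp
  also have "\<dots> = (\<Sum>w\<in>permutations_of_set {1..n}. fps_X ^ cdl E w)"
    by (rule sum.reindex_bij_betw[OF map_perm_bij])
  also have "\<dots> = (\<Sum>x\<in>Sigma (permutations_of_set {2..n}) (\<lambda>_. {..<n}). fps_X ^ cdl E ((\<lambda>(r,k). rotate k (1 # r)) x))"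
    by (rule sum.reindex_bij_betw[OF rot_bij[OF n], symmetric])
  also have "\<dots> = (\<Sum>r\<in>permutations_of_set {2..n}. \<Sum>k<n. fps_X ^ cdl E (rotate k (1 # r)))"
    by (subst sum.Sigma) (auto simp: case_prod_beta)
  also have "\<dots> = (\<Sum>r\<in>permutations_of_set {2..n}. of_nat n * fps_X ^ cdl E (1 # r))"
    by (simp add: cdl_rotate)
  also have "\<dots> = of_nat n * Fp E n" by (simp add: Fp_def sum_distrib_left)
  finally show ?thesis .
qed



lemma col_step:
  fixes n j k :: nat and E :: "nat \<Rightarrow> nat \<Rightarrow> bool"
  defines "H \<equiv> compl_graph n E"
  defines "C \<equiv> \<lambda>j. {c \<in> {1..j} \<rightarrow>\<^sub>E {..<k}. \<forall>a\<in>{1..j}. \<forall>b\<in>{1..j}. H a b \<longrightarrow> c a \<noteq> c b}"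
  assumes sym: "\<forall>a b. E a b \<longrightarrow> E b a"
    and iv: "\<forall>i j. i < j \<and> compl_graph n E i j \<longrightarrow>
           (\<forall>a b. i \<le> a \<and> a < b \<and> b \<le> j \<longrightarrow> compl_graph n E a b)"
    and jn: "Suc j \<le> n"
  shows "card (C (Suc j)) = card (C j) * (k - acnt E (Suc j)) \<and> (card (C j) \<noteq> 0 \<longrightarrow> acnt E (Suc j) \<le> k)"
proof -
  define N where "N = {i \<in> {1..j}. H i (Suc j)}"
  have Hsym: "H a b \<Longrightarrow> H b a" for a b using sym unfolding H_def compl_graph_def by auto
  have Hirr: "\<not> H a a" for a unfolding H_def compl_graph_def by auto
  have cardN: "card N = acnt E (Suc j)"
  proof -
    have "N = {i\<in>{1..<Suc j}. \<not> E (Suc j) i}"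
      using jn sym unfolding N_def H_def compl_graph_def by auto
    then show ?thesis by (simp add: acnt_def)
  qed
  have clique: "H i i'" if "i \<in> N" "i' \<in> N" "i < i'" for i i'
  proof -
    have "i < Suc j" "compl_graph n E i (Suc j)" "i' \<le> Suc j" using that unfolding N_def H_def by auto
    then show ?thesis using iv[rule_format, of i "Suc j" i i'] that(3) unfolding H_def by auto
  qed
  have injc: "inj_on c N" if c: "c \<in> C j" for c
  proof (rule inj_onI)
    fix i i' assume i: "i \<in> N" and i': "i' \<in> N" and eq: "c i = c i'"
    show "i = i'"
    proof (rule ccontr)
      assume "i \<noteq> i'"
      then have "H i i'" using clique[OF i i'] clique[OF i' i] Hsym by (cases "i < i'") auto
      moreover have "i \<in> {1..j}" "i' \<in> {1..j}" using i i' by (auto simp: N_def)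
      ultimately show False using c eq unfolding C_def by blast
    qed
  qed
  have cimg: "c ` N \<subseteq> {..<k}" if c: "c \<in> C j" for c
    using c unfolding C_def N_def by (auto simp: PiE_iff)
  have fib: "card ({..<k} - c ` N) = k - acnt E (Suc j)" if c: "c \<in> C j" for c
    using card_Diff_subset[OF _ cimg[OF c]] card_image[OF injc[OF c]] cardN
    by (simp add: finite_subset[OF cimg[OF c]])
  define f where "f = (\<lambda>(c::nat\<Rightarrow>nat, x::nat). c(Suc j := x))"
  have img: "C (Suc j) = f ` Sigma (C j) (\<lambda>c. {..<k} - c ` N)"
  proof
    show "f ` Sigma (C j) (\<lambda>c. {..<k} - c ` N) \<subseteq> C (Suc j)"
    proof
      fix y assume "y \<in> f ` Sigma (C j) (\<lambda>c. {..<k} - c ` N)"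
      then obtain c x where c: "c \<in> C j" and x: "x \<in> {..<k} - c ` N" and y: "y = f (c, x)" by auto
      have cP: "c \<in> {1..j} \<rightarrow>\<^sub>E {..<k}" using c by (simp add: C_def)
      have "c(Suc j := x) \<in> {1..Suc j} \<rightarrow>\<^sub>E {..<k}"
        using cP x by (auto simp: PiE_iff extensional_def)
      moreover have "\<forall>a\<in>{1..Suc j}. \<forall>b\<in>{1..Suc j}. H a b \<longrightarrow> (c(Suc j := x)) a \<noteq> (c(Suc j := x)) b"
      proof (intro ballI impI)
        fix a b assume a: "a \<in> {1..Suc j}" and b: "b \<in> {1..Suc j}" and h: "H a b"
        show "(c(Suc j := x)) a \<noteq> (c(Suc j := x)) b"
        proof (cases "a = Suc j"; cases "b = Suc j")
          assume "a = Suc j" "b = Suc j" then show ?thesis using h Hirr by simp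
        next
          assume "a = Suc j" "b \<noteq> Suc j"
          then have "b \<in> N" using b h Hsym by (auto simp: N_def)
          then show ?thesis using x \<open>a = Suc j\<close> \<open>b \<noteq> Suc j\<close> by auto
        next
          assume "a \<noteq> Suc j" "b = Suc j"
          then have "a \<in> N" using a h by (auto simp: N_def)
          then show ?thesis using x \<open>a \<noteq> Suc j\<close> \<open>b = Suc j\<close> by auto
        next
          assume "a \<noteq> Suc j" "b \<noteq> Suc j"
          then show ?thesis using a b h c unfolding C_def by auto
        qed
      qed
      ultimately show "y \<in> C (Suc j)" by (simp add: C_def f_def y)
    qed
  next
    show "C (Suc j) \<subseteq> f ` Sigma (C j) (\<lambda>c. {..<k} - c ` N)"
    proof
      fix c' assume c': "c' \<in> C (Suc j)"
      define c where "c = c'(Suc j := undefined)"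
      have cP': "c' \<in> {1..Suc j} \<rightarrow>\<^sub>E {..<k}" using c' by (simp add: C_def)
      have "c \<in> {1..j} \<rightarrow>\<^sub>E {..<k}" using cP' by (auto simp: PiE_iff c_def extensional_def)
      moreover have "\<forall>a\<in>{1..j}. \<forall>b\<in>{1..j}. H a b \<longrightarrow> c a \<noteq> c b"
        using c' unfolding C_def c_def by auto
      ultimately have cC: "c \<in> C j" by (simp add: C_def)
      have "c' (Suc j) \<in> {..<k}" using cP' by auto
      moreover have "c' (Suc j) \<notin> c ` N"
      proof
        assume "c' (Suc j) \<in> c ` N"
        then obtain i where i: "i \<in> N" "c' (Suc j) = c i" by auto
        then have "c i = c' i" "i \<in> {1..Suc j}" "H i (Suc j)" by (auto simp: c_def N_def)
        then show False using c' i unfolding C_def by force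
      qed
      moreover have "c' = f (c, c' (Suc j))" by (auto simp: f_def c_def)
      ultimately show "c' \<in> f ` Sigma (C j) (\<lambda>c. {..<k} - c ` N)" using cC by blast
    qed
  qed
  have inj: "inj_on f (Sigma (C j) (\<lambda>c. {..<k} - c ` N))"
  proof (rule inj_onI)
    fix a b assume a: "a \<in> Sigma (C j) (\<lambda>c. {..<k} - c ` N)" and b: "b \<in> Sigma (C j) (\<lambda>c. {..<k} - c ` N)"
      and eq0: "f a = f b"
    obtain c x where ak: "a = (c, x)" by (cases a)
    obtain c2 x2 where bk: "b = (c2, x2)" by (cases b)
    have c: "c \<in> C j" and c2: "c2 \<in> C j" and eq: "f (c, x) = f (c2, x2)" using a b eq0 by (auto simp: ak bk)
    have e: "c(Suc j := x) = c2(Suc j := x2)" using eq by (simp add: f_def)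
    have "x = x2" using fun_cong[OF e, of "Suc j"] by simp
    moreover have "c = c2"
    proof
      fix i show "c i = c2 i"
      proof (cases "i = Suc j")
        case True
        have "c i = undefined" "c2 i = undefined" using c c2 True unfolding C_def by (auto simp: PiE_iff extensional_def)
        then show ?thesis by simp
      next
        case False then show ?thesis using fun_cong[OF e, of i] by simp
      qed
    qed
    ultimately show "a = b" by (simp add: ak bk)
  qed
  have finC: "finite (C j)" unfolding C_def
    by (rule finite_subset[of _ "{1..j} \<rightarrow>\<^sub>E {..<k}"]) (auto intro: finite_PiE)
  have "card (C (Suc j)) = card (Sigma (C j) (\<lambda>c. {..<k} - c ` N))"
    unfolding img by (rule card_image[OF inj])
  also have "\<dots> = (\<Sum>c\<in>C j. card ({..<k} - c ` N))" by (rule card_SigmaI) (auto simp: finC)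
  also have "\<dots> = card (C j) * (k - acnt E (Suc j))" by (simp add: fib)
  finally have 1: "card (C (Suc j)) = card (C j) * (k - acnt E (Suc j))" .
  have 2: "acnt E (Suc j) \<le> k" if nz: "card (C j) \<noteq> 0"
  proof -
    obtain c where c: "c \<in> C j" using nz card.empty by (metis ex_in_conv)
    have "card (c ` N) \<le> card {..<k}" by (rule card_mono[OF _ cimg[OF c]]) simp
    then show ?thesis using card_image[OF injc[OF c]] cardN by simp
  qed
  show ?thesis using 1 2 by blast
qed

lemma col_count:
  fixes n k :: nat and E :: "nat \<Rightarrow> nat \<Rightarrow> bool"
  assumes sym: "\<forall>a b. E a b \<longrightarrow> E b a"
    and iv: "\<forall>i j. i < j \<and> compl_graph n E i j \<longrightarrow>
           (\<forall>a b. i \<le> a \<and> a < b \<and> b \<le> j \<longrightarrow> compl_graph n E a b)"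
  shows "j \<le> n \<Longrightarrow> (of_nat (num_colorings {1..j} (compl_graph n E) k) :: rat)
            = (\<Prod>i\<in>{1..j}. of_nat k - of_nat (acnt E i))"
proof (induction j)
  case 0
  then show ?case by (simp add: num_colorings_def)
next
  case (Suc j)
  have st: "num_colorings {1..Suc j} (compl_graph n E) k = num_colorings {1..j} (compl_graph n E) k * (k - acnt E (Suc j))
     \<and> (num_colorings {1..j} (compl_graph n E) k \<noteq> 0 \<longrightarrow> acnt E (Suc j) \<le> k)"
    unfolding num_colorings_def by (rule col_step[OF sym iv Suc.prems])
  have IH: "(of_nat (num_colorings {1..j} (compl_graph n E) k) :: rat) = (\<Prod>i\<in>{1..j}. of_nat k - of_nat (acnt E i))"
    using Suc by simp
  have pr: "(\<Prod>i\<in>{1..Suc j}. (of_nat k - of_nat (acnt E i)) :: rat) = (\<Prod>i\<in>{1..j}. of_nat k - of_nat (acnt E i)) * (of_nat k - of_nat (acnt E (Suc j)))"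
    by (simp add: prod.nat_ivl_Suc' mult.commute)
  show ?case
  proof (cases "num_colorings {1..j} (compl_graph n E) k = 0")
    case True
    then show ?thesis using st IH pr by simp
  next
    case False
    then have "acnt E (Suc j) \<le> k" using st by blast
    then show ?thesis using st IH pr by (simp add: of_nat_diff)
  qed
qed

lemma poly_unique_nat:
  fixes p q :: "rat poly"
  assumes "\<forall>k::nat. poly p (of_nat k) = poly q (of_nat k)"
  shows "p = q"
proof (rule ccontr)
  assume "p \<noteq> q"
  then have "p - q \<noteq> 0" by simp
  then have "finite {x. poly (p - q) x = 0}" by (rule poly_roots_finite)
  moreover have "range (of_nat :: nat \<Rightarrow> rat) \<subseteq> {x. poly (p - q) x = 0}" using assms by auto
  moreover have "infinite (range (of_nat :: nat \<Rightarrow> rat))"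
    by (rule range_inj_infinite) (simp add: inj_on_def)
  ultimately show False using finite_subset by blast
qed

lemma chrom_eq:
  fixes n :: nat and E :: "nat \<Rightarrow> nat \<Rightarrow> bool"
  assumes sym: "\<forall>a b. E a b \<longrightarrow> E b a"
    and iv: "\<forall>i j. i < j \<and> compl_graph n E i j \<longrightarrow>
           (\<forall>a b. i \<le> a \<and> a < b \<and> b \<le> j \<longrightarrow> compl_graph n E a b)"
  shows "chromatic_poly {1..n} (compl_graph n E) = (\<Prod>i\<in>{1..n}. [:- of_nat (acnt E i), 1:])"
proof -
  let ?P = "(\<Prod>i\<in>{1..n}. [:- of_nat (acnt E i), 1:]) :: rat poly"
  have ev: "\<forall>k::nat. poly ?P (of_nat k) = of_nat (num_colorings {1..n} (compl_graph n E) k)"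
    using col_count[OF sym iv, of n] by (simp add: poly_prod)
  show ?thesis unfolding chromatic_poly_def
  proof (rule the_equality)
    show "\<forall>k::nat. poly ?P (of_nat k) = of_nat (num_colorings {1..n} (compl_graph n E) k)" by (rule ev)
  next
    fix p :: "rat poly" assume "\<forall>k::nat. poly p (of_nat k) = of_nat (num_colorings {1..n} (compl_graph n E) k)"
    then show "p = ?P" using ev by (intro poly_unique_nat) simp
  qed
qed

lemma acnt_1: "acnt E 1 = 0" "acnt E (Suc 0) = 0" by (simp_all add: acnt_def)

lemma Q_eval:
  fixes n :: nat and E :: "nat \<Rightarrow> nat \<Rightarrow> bool"
  assumes n: "1 \<le> n" and sym: "\<forall>a b. E a b \<longrightarrow> E b a"
    and iv: "\<forall>i j. i < j \<and> compl_graph n E i j \<longrightarrow>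
           (\<forall>a b. i \<le> a \<and> a < b \<and> b \<le> j \<longrightarrow> compl_graph n E a b)"
  shows "poly (Q_poly n E) (of_nat m) = (-1) ^ n * of_nat (\<Prod>i\<in>{2..n}. m + acnt E i)"
proof -
  define R where "R = ((\<Prod>i\<in>{2..n}. [:- of_nat (acnt E i), -1:]) :: rat poly)"
  have pc: "[:c, 1:] \<circ>\<^sub>p [:0, -1:] = [:c, -1::rat:]" for c
    by (simp add: pcompose_pCons)
  have s: "{1..n} = insert 1 {2..n}" using n by auto
  have "chromatic_poly {1..n} (compl_graph n E) \<circ>\<^sub>p [:0, -1:] = (\<Prod>i\<in>{1..n}. [:- of_nat (acnt E i), -1:])"
    unfolding chrom_eq[OF sym iv] pcompose_prod by (simp add: pc)
  also have "\<dots> = [:0, -1:] * R"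
    unfolding s R_def by (subst prod.insert) (auto simp: acnt_1)
  also have "\<dots> = [:0, 1:] * ([:-1:] * R)" by simp
  finally have eqc: "chromatic_poly {1..n} (compl_graph n E) \<circ>\<^sub>p [:0, -1:] = [:0, 1:] * ([:-1:] * R)" .
  have "Q_poly n E = ([:0, 1:] * ([:-1:] * R)) div [:0, 1:]" unfolding Q_poly_def eqc ..
  also have "\<dots> = [:-1:] * R" by (rule nonzero_mult_div_cancel_left) simp
  finally have "Q_poly n E = [:-1:] * R" .
  then have "poly (Q_poly n E) (of_nat m) = - (\<Prod>i\<in>{2..n}. - of_nat (acnt E i) - of_nat m)"
    by (simp add: R_def poly_prod)
  also have "\<dots> = - ((-1) ^ card {2..n} * (\<Prod>i\<in>{2..n}. of_nat m + of_nat (acnt E i)))"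
  proof -
    have "(\<Prod>i\<in>{2..n}. - of_nat (acnt E i) - of_nat m) = (\<Prod>i\<in>{2..n}. - (of_nat m + of_nat (acnt E i) :: rat))"
      by (rule prod.cong) simp_all
    then show ?thesis using prod_uminus[of "\<lambda>i. of_nat m + of_nat (acnt E i) :: rat" "{2..n}"] by simp
  qed
  also have "\<dots> = (-1) ^ n * (\<Prod>i\<in>{2..n}. of_nat m + of_nat (acnt E i))"
  proof -
    have c: "card {2..n} = n - 1" by simp
    have h: "- ((-1::rat) ^ (n - 1)) = (-1) ^ n" using n by (cases n) auto
    show ?thesis unfolding c using h by (metis minus_mult_left)
  qed
  finally show ?thesis by simp
qed



theorem mainTheorem17:
  fixes n :: nat and E :: "nat \<Rightarrow> nat \<Rightarrow> bool"
  assumes "n \<ge> 1"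
    and "simple_graph_on n E"
    and "\<forall>i j. i < j \<and> compl_graph n E i j \<longrightarrow>
           (\<forall>a b. i \<le> a \<and> a < b \<and> b \<le> j \<longrightarrow> compl_graph n E a b)"
  shows "fps_of_poly (cyc_eulerian n E) / (1 - fps_X) ^ n
       = fps_const ((-1) ^ n * of_nat n) * Abs_fps (\<lambda>m. poly (Q_poly n E) (of_nat m))"
proof -
  note n = assms(1)
  note iv = assms(3)
  have sym: "\<forall>a b. E a b \<longrightarrow> E b a" using assms(2) by (simp add: simple_graph_on_def)
  have clq: "\<forall>j. 2 \<le> j \<longrightarrow> j \<le> n \<longrightarrow> (\<forall>y x. 1 \<le> y \<longrightarrow> y < x \<longrightarrow> x < j \<longrightarrow> \<not> E j y \<longrightarrow> \<not> E x y)"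
  proof (intro allI impI)
    fix j y x assume j2: "2 \<le> j" and jn: "j \<le> n" and y1: "1 \<le> y" and yx: "y < x" and xj: "x < j"
      and nE: "\<not> E j y"
    have "compl_graph n E y j" using j2 jn y1 yx xj nE sym by (auto simp: compl_graph_def)
    then have "compl_graph n E y x" using iv[rule_format, of y j y x] yx xj by auto
    then show "\<not> E x y" using sym by (auto simp: compl_graph_def)
  qed
  have F: "Fp E n = Gs E n * (1 - fps_X) ^ n" using Fp_Gs[OF clq n] by simp
  have nz0: "(1 - fps_X :: rat fps) \<noteq> 0"
  proof
    assume "(1 - fps_X :: rat fps) = 0"
    then have "(1 - fps_X :: rat fps) $ 0 = 0" by simp
    then show False by simp
  qed
  then have nz: "(1 - fps_X :: rat fps) ^ n \<noteq> 0" by simp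
  have L: "fps_of_poly (cyc_eulerian n E) / (1 - fps_X) ^ n = of_nat n * Gs E n"
    unfolding cyc_Fp[OF n] F mult.assoc[symmetric] by (rule fps_divide_times_eq[OF nz])
  show ?thesis unfolding L
  proof (rule fps_ext)
    fix m
    have q: "poly (Q_poly n E) (of_nat m) = (-1) ^ n * of_nat (\<Prod>i\<in>{2..n}. m + acnt E i)"
      by (rule Q_eval[OF n sym iv])
    have s: "((-1::rat) ^ n) * ((-1) ^ n) = 1" by (simp add: power_mult_distrib[symmetric])
    have "(fps_const ((-1) ^ n * of_nat n) * Abs_fps (\<lambda>m. poly (Q_poly n E) (of_nat m))) $ m
        = ((-1) ^ n * of_nat n) * ((-1) ^ n * of_nat (\<Prod>i\<in>{2..n}. m + acnt E i))"
      by (simp add: q)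
    also have "\<dots> = ((-1) ^ n * (-1) ^ n) * (of_nat n * of_nat (\<Prod>i\<in>{2..n}. m + acnt E i))"
      by (simp only: ac_simps)
    also have "\<dots> = (of_nat n * Gs E n) $ m" unfolding s by (simp add: Gs_def fps_of_nat)
    finally show "(of_nat n * Gs E n) $ m = (fps_const ((-1) ^ n * of_nat n) * Abs_fps (\<lambda>m. poly (Q_poly n E) (of_nat m))) $ m"
      by (rule HOL.sym)
  qed
qed

end
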